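(* Let $\mathcal{G}=(\mathcal{V},\mathcal{E})$ be connected, $c\in\mathbb{R}^n$, and $D(y)=-(\mathbf{A}c)^\top y-\tfrac12\|\mathbf{A}^\top y\|^2$ for $y\in\mathbb{R}^m$, with $y^*$ any maximizer of $D$. Let $y^0=0$ and, for $t\ge0$, choose an edge $e\in\mathcal{E}$ uniformly at random (independently across iterations) and set $y^{t+1}=y^t+\lambda^tf_e$ with $\lambda^t=\arg\max_{\lambda\in\mathbb{R}}D(y^t+\lambda f_e)$. (Equivalently, with $x^t=c+\mathbf{A}^\top y^t$, the values at the endpoints of $e$ are replaced by their average.) Then for all $k\ge0$ $$\mathbb{E}[D(y^* )-D(y^k)]\le\Big(1-\frac{\alpha(\mathcal{G})}{2m}\Big)^k\big[D(y^* )-D(y^0)\big].$$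
   Context: $\mathcal{G}$ has $n$ vertices $\mathcal{V}=\{1,\dots,n\}$ and $m=|\mathcal{E}|$ edges. $\mathbf{A}\in\mathbb{R}^{m\times n}$ has, for each edge $e=(i,j)$ (fixed orientation), a row with $1$ in column $i$, $-1$ in column $j$ and zeros elsewhere; $f_e\in\mathbb{R}^m$ is the unit basis vector of edge $e$. The algebraic connectivity $\alpha(\mathcal{G})$ is the second smallest eigenvalue of the Laplacian $\mathbf{L}=\mathbf{A}^\top\mathbf{A}$. $\|\cdot\|$ is the Euclidean norm. *)

theory Defs
  imports "Jordan_Normal_Form.Char_Poly" "HOL-Library.Multiset"
begin

text \<open>A graph on vertices {0..<n} is given by a list E of (oriented) edges (i,j);
  m = length E and edge e is E ! e, with e in {0..<m}.\<close>

definition simple_graph :: "nat \<Rightarrow> (nat \<times> nat) list \<Rightarrow> bool" where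
  "simple_graph n E \<longleftrightarrow>
     (\<forall>(i,j)\<in>set E. i < n \<and> j < n \<and> i \<noteq> j) \<and>
     distinct (map (\<lambda>(i,j). {i,j}) E)"

definition adj :: "(nat \<times> nat) list \<Rightarrow> nat \<Rightarrow> nat \<Rightarrow> bool" where
  "adj E u v \<longleftrightarrow> (\<exists>(i,j)\<in>set E. (u = i \<and> v = j) \<or> (u = j \<and> v = i))"

definition graph_connected :: "nat \<Rightarrow> (nat \<times> nat) list \<Rightarrow> bool" where
  "graph_connected n E \<longleftrightarrow> (\<forall>u<n. \<forall>v<n. (adj E)\<^sup>*\<^sup>* u v)"

definition incidence :: "nat \<Rightarrow> (nat \<times> nat) list \<Rightarrow> real mat" where
  "incidence n E = mat (length E) n
     (\<lambda>(e,k). if k = fst (E ! e) then 1 else if k = snd (E ! e) then -1 else 0)"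

definition laplacian :: "nat \<Rightarrow> (nat \<times> nat) list \<Rightarrow> real mat" where
  "laplacian n E = transpose_mat (incidence n E) * incidence n E"

text \<open>Eigenvalues (with multiplicity) of a real matrix: roots of its characteristic polynomial.
  Algebraic connectivity = second smallest eigenvalue of the Laplacian.\<close>
definition algebraic_connectivity :: "nat \<Rightarrow> (nat \<times> nat) list \<Rightarrow> real" where
  "algebraic_connectivity n E =
     sorted_list_of_multiset (proots (char_poly (laplacian n E))) ! 1"

definition vnorm :: "real vec \<Rightarrow> real" where
  "vnorm v = sqrt (v \<bullet> v)"

definition dualD :: "nat \<Rightarrow> (nat \<times> nat) list \<Rightarrow> real vec \<Rightarrow> real vec \<Rightarrow> real" where
  "dualD n E c y = - ((incidence n E *\<^sub>v c) \<bullet> y)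
                   - 1/2 * (vnorm (transpose_mat (incidence n E) *\<^sub>v y))\<^sup>2"

definition step_size :: "nat \<Rightarrow> (nat \<times> nat) list \<Rightarrow> real vec \<Rightarrow> real vec \<Rightarrow> nat \<Rightarrow> real" where
  "step_size n E c y e = (THE l. \<forall>l'.
      dualD n E c (y + l' \<cdot>\<^sub>v unit_vec (length E) e) \<le> dualD n E c (y + l \<cdot>\<^sub>v unit_vec (length E) e))"

definition cd_step :: "nat \<Rightarrow> (nat \<times> nat) list \<Rightarrow> real vec \<Rightarrow> real vec \<Rightarrow> nat \<Rightarrow> real vec" where
  "cd_step n E c y e = y + step_size n E c y e \<cdot>\<^sub>v unit_vec (length E) e"

definition cd_iter :: "nat \<Rightarrow> (nat \<times> nat) list \<Rightarrow> real vec \<Rightarrow> nat list \<Rightarrow> real vec" where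
  "cd_iter n E c es = foldl (cd_step n E c) (0\<^sub>v (length E)) es"

text \<open>Expectation over k independent uniform edge choices: average over all edge sequences of length k.\<close>
definition expect_k :: "nat \<Rightarrow> nat \<Rightarrow> (nat list \<Rightarrow> real) \<Rightarrow> real" where
  "expect_k m k f = (\<Sum>es\<in>{es. length es = k \<and> set es \<subseteq> {0..<m}}. f es) / real m ^ k"

end

theory Submission
  imports Defs "HOL-Analysis.Function_Topology"
begin


definition inc :: "(nat \<times> nat) list \<Rightarrow> nat \<Rightarrow> nat \<Rightarrow> real" where
  "inc E e k = (if k = fst (E ! e) then 1 else if k = snd (E ! e) then -1 else 0)"

definition xv :: "(nat \<times> nat) list \<Rightarrow> real vec \<Rightarrow> real vec \<Rightarrow> nat \<Rightarrow> real" where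
  "xv E c y k = c $ k + (\<Sum>e=0..<length E. inc E e k * y $ e)"

definition Qf :: "(nat \<times> nat) list \<Rightarrow> (nat \<Rightarrow> real) \<Rightarrow> real" where
  "Qf E x = (\<Sum>e=0..<length E. (x (fst (E!e)) - x (snd (E!e)))\<^sup>2)"

definition Bf :: "(nat \<times> nat) list \<Rightarrow> (nat \<Rightarrow> real) \<Rightarrow> (nat \<Rightarrow> real) \<Rightarrow> real" where
  "Bf E x w = (\<Sum>e=0..<length E. (x (fst (E!e)) - x (snd (E!e))) * (w (fst (E!e)) - w (snd (E!e))))"

definition nsq :: "nat \<Rightarrow> (nat \<Rightarrow> real) \<Rightarrow> real" where
  "nsq n x = (\<Sum>k=0..<n. (x k)\<^sup>2)"

lemma incidence_carrier: "incidence n E \<in> carrier_mat (length E) n"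
  by (simp add: incidence_def)

lemma incidence_index: "e < length E \<Longrightarrow> k < n \<Longrightarrow> incidence n E $$ (e,k) = inc E e k"
  by (simp add: incidence_def inc_def)

lemma simple_edge: assumes "simple_graph n E" "e < length E"
  shows "fst (E!e) < n" "snd (E!e) < n" "fst (E!e) \<noteq> snd (E!e)"
proof -
  have "E!e \<in> set E" using assms(2) by simp
  then show "fst (E!e) < n" "snd (E!e) < n" "fst (E!e) \<noteq> snd (E!e)"
    using assms(1) unfolding simple_graph_def by (auto simp: case_prod_beta)
qed

lemma inc_alt: assumes "simple_graph n E" "e < length E"
  shows "inc E e k = (if k = fst (E!e) then 1 else 0) - (if k = snd (E!e) then 1 else 0)"
  using simple_edge[OF assms] by (auto simp: inc_def)

lemma sum_inc_mult: assumes "simple_graph n E" "e < length E"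
  shows "(\<Sum>k=0..<n. inc E e k * f k) = f (fst (E!e)) - f (snd (E!e))"
proof -
  have eq: "inc E e k * f k = (if k = fst (E!e) then f k else 0) - (if k = snd (E!e) then f k else 0)" for k
    unfolding inc_alt[OF assms] by simp
  have "(\<Sum>k=0..<n. inc E e k * f k) = (\<Sum>k=0..<n. (if k = fst (E!e) then f k else 0)) - (\<Sum>k=0..<n. (if k = snd (E!e) then f k else 0))"
    unfolding eq by (simp add: sum_subtractf)
  also have "\<dots> = f (fst (E!e)) - f (snd (E!e))" using simple_edge[OF assms] by (simp add: sum.delta')
  finally show ?thesis .
qed

lemma sum_inc_sq: assumes "simple_graph n E" "e < length E"
  shows "(\<Sum>k=0..<n. (inc E e k)\<^sup>2) = 2"
proof -
  have "(\<Sum>k=0..<n. (inc E e k)\<^sup>2) = (\<Sum>k=0..<n. inc E e k * inc E e k)" by (simp add: power2_eq_square)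
  also have "\<dots> = inc E e (fst (E!e)) - inc E e (snd (E!e))" by (rule sum_inc_mult[OF assms])
  also have "\<dots> = 2" using simple_edge[OF assms] by (simp add: inc_def)
  finally show ?thesis .
qed

lemma sum_inc: assumes "simple_graph n E" "e < length E"
  shows "(\<Sum>k=0..<n. inc E e k) = 0"
  using sum_inc_mult[OF assms, of "\<lambda>_. 1"] by simp

lemma dualD_formula:
  assumes c: "c \<in> carrier_vec n" and y: "y \<in> carrier_vec (length E)"
  shows "dualD n E c y = 1/2 * (\<Sum>k=0..<n. (c$k)\<^sup>2) - 1/2 * (\<Sum>k=0..<n. (xv E c y k)\<^sup>2)"
proof -
  let ?A = "incidence n E" let ?m = "length E"
  define s where "s k = (\<Sum>e=0..<?m. inc E e k * y $ e)" for k
  have A: "?A \<in> carrier_mat ?m n" by (rule incidence_carrier)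
  have Ac: "(?A *\<^sub>v c) $ e = (\<Sum>k=0..<n. inc E e k * c $ k)" if "e < ?m" for e
    using that A c by (simp add: scalar_prod_def incidence_index)
  have t1: "(?A *\<^sub>v c) \<bullet> y = (\<Sum>e=0..<?m. (\<Sum>k=0..<n. inc E e k * c $ k) * y $ e)"
    using y by (simp add: scalar_prod_def Ac)
  also have "\<dots> = (\<Sum>k=0..<n. c $ k * s k)"
    unfolding s_def sum_distrib_left sum_distrib_right by (subst sum.swap) (simp add: ac_simps)
  finally have t1: "(?A *\<^sub>v c) \<bullet> y = (\<Sum>k=0..<n. c $ k * s k)" .
  have ATy: "(transpose_mat ?A *\<^sub>v y) $ k = s k" if "k < n" for k
    using that A y by (simp add: scalar_prod_def s_def incidence_index)
  have "(vnorm (transpose_mat ?A *\<^sub>v y))\<^sup>2 = (transpose_mat ?A *\<^sub>v y) \<bullet> (transpose_mat ?A *\<^sub>v y)"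
    unfolding vnorm_def by (simp add: scalar_prod_def sum_nonneg)
  also have "\<dots> = (\<Sum>k=0..<n. (transpose_mat ?A *\<^sub>v y)$k * (transpose_mat ?A *\<^sub>v y)$k)"
    using A by (simp add: scalar_prod_def)
  also have "\<dots> = (\<Sum>k=0..<n. (s k)\<^sup>2)"
    by (rule sum.cong) (auto simp: ATy power2_eq_square)
  finally have t2: "(vnorm (transpose_mat ?A *\<^sub>v y))\<^sup>2 = (\<Sum>k=0..<n. (s k)\<^sup>2)" .
  have xs: "xv E c y k = c$k + s k" for k unfolding xv_def s_def by simp
  have "(\<Sum>k=0..<n. (xv E c y k)\<^sup>2) = (\<Sum>k=0..<n. (c$k)\<^sup>2 + 2 * (c$k * s k) + (s k)\<^sup>2)"
    unfolding xs by (simp add: power2_eq_square algebra_simps)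
  also have "\<dots> = (\<Sum>k=0..<n. (c$k)\<^sup>2) + 2 * (\<Sum>k=0..<n. c $ k * s k) + (\<Sum>k=0..<n. (s k)\<^sup>2)"
    by (simp add: sum.distrib sum_distrib_left)
  finally show ?thesis unfolding dualD_def t1 t2 by (simp add: field_simps)
qed



lemma xv_step:
  assumes y: "y \<in> carrier_vec (length E)" and e: "e < length E"
  shows "xv E c (y + l \<cdot>\<^sub>v unit_vec (length E) e) k = xv E c y k + l * inc E e k"
proof -
  have "(\<Sum>e'=0..<length E. inc E e' k * (y + l \<cdot>\<^sub>v unit_vec (length E) e) $ e')
      = (\<Sum>e'=0..<length E. inc E e' k * y $ e' + (if e' = e then l * inc E e k else 0))"
    by (rule sum.cong) (use y e in \<open>auto simp: algebra_simps\<close>)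
  also have "\<dots> = (\<Sum>e'=0..<length E. inc E e' k * y $ e') + l * inc E e k"
    using e by (simp add: sum.distrib sum.delta')
  finally show ?thesis unfolding xv_def by simp
qed

lemma dualD_line:
  assumes G: "simple_graph n E" and c: "c \<in> carrier_vec n" and y: "y \<in> carrier_vec (length E)"
    and e: "e < length E"
  shows "dualD n E c (y + l \<cdot>\<^sub>v unit_vec (length E) e) = dualD n E c y
      - l * (xv E c y (fst (E!e)) - xv E c y (snd (E!e))) - l\<^sup>2"
proof -
  let ?x = "xv E c y"
  have y': "y + l \<cdot>\<^sub>v unit_vec (length E) e \<in> carrier_vec (length E)" using y by simp
  have "(\<Sum>k=0..<n. (xv E c (y + l \<cdot>\<^sub>v unit_vec (length E) e) k)\<^sup>2)
     = (\<Sum>k=0..<n. (?x k)\<^sup>2 + 2 * l * (inc E e k * ?x k) + l\<^sup>2 * (inc E e k)\<^sup>2)"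
    unfolding xv_step[OF y e] by (simp add: power2_eq_square algebra_simps)
  also have "\<dots> = (\<Sum>k=0..<n. (?x k)\<^sup>2) + 2 * l * (\<Sum>k=0..<n. inc E e k * ?x k) + l\<^sup>2 * (\<Sum>k=0..<n. (inc E e k)\<^sup>2)"
    by (simp add: sum.distrib sum_distrib_left)
  also have "\<dots> = (\<Sum>k=0..<n. (?x k)\<^sup>2) + 2 * l * (?x (fst (E!e)) - ?x (snd (E!e))) + l\<^sup>2 * 2"
    using sum_inc_mult[OF G e] sum_inc_sq[OF G e] by simp
  finally show ?thesis unfolding dualD_formula[OF c y'] dualD_formula[OF c y] by (simp add: algebra_simps)
qed

lemma step_size_eq:
  assumes G: "simple_graph n E" and c: "c \<in> carrier_vec n" and y: "y \<in> carrier_vec (length E)"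
    and e: "e < length E"
  shows "step_size n E c y e = - (xv E c y (fst (E!e)) - xv E c y (snd (E!e))) / 2"
proof -
  define d where "d = xv E c y (fst (E!e)) - xv E c y (snd (E!e))"
  have L: "dualD n E c (y + l \<cdot>\<^sub>v unit_vec (length E) e) = dualD n E c y + d\<^sup>2/4 - (l + d/2)\<^sup>2" for l
    unfolding dualD_line[OF G c y e] d_def[symmetric] by (simp add: power2_eq_square field_simps)
  show ?thesis unfolding step_size_def d_def[symmetric]
  proof (rule the_equality)
    show "\<forall>l'. dualD n E c (y + l' \<cdot>\<^sub>v unit_vec (length E) e) \<le> dualD n E c (y + (- d / 2) \<cdot>\<^sub>v unit_vec (length E) e)"
      unfolding L by simp
  next
    fix l assume "\<forall>l'. dualD n E c (y + l' \<cdot>\<^sub>v unit_vec (length E) e) \<le> dualD n E c (y + l \<cdot>\<^sub>v unit_vec (length E) e)"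
    then have "dualD n E c (y + (- d/2) \<cdot>\<^sub>v unit_vec (length E) e) \<le> dualD n E c (y + l \<cdot>\<^sub>v unit_vec (length E) e)" by blast
    then have "(l + d/2)\<^sup>2 \<le> 0" unfolding L by simp
    then have "l + d/2 = 0" by (smt (verit) zero_eq_power2 zero_le_power2)
    then show "l = - d / 2" by simp
  qed
qed

lemma cd_step_carrier: "y \<in> carrier_vec (length E) \<Longrightarrow> cd_step n E c y e \<in> carrier_vec (length E)"
  by (simp add: cd_step_def)

lemma dualD_cd_step:
  assumes G: "simple_graph n E" and c: "c \<in> carrier_vec n" and y: "y \<in> carrier_vec (length E)"
    and e: "e < length E"
  shows "dualD n E c (cd_step n E c y e) = dualD n E c y + (xv E c y (fst (E!e)) - xv E c y (snd (E!e)))\<^sup>2 / 4"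
  unfolding cd_step_def dualD_line[OF G c y e] step_size_eq[OF G c y e]
  by (simp add: power2_eq_square field_simps)

lemma cd_iter_carrier: "cd_iter n E c es \<in> carrier_vec (length E)"
proof -
  have "foldl (cd_step n E c) y es \<in> carrier_vec (length E)" if "y \<in> carrier_vec (length E)" for y
    using that by (induction es arbitrary: y) (auto simp: cd_step_carrier)
  then show ?thesis unfolding cd_iter_def by simp
qed



lemma sum_xv:
  assumes G: "simple_graph n E"
  shows "(\<Sum>k=0..<n. xv E c y k) = (\<Sum>k=0..<n. c $ k)"
proof -
  have "(\<Sum>k=0..<n. (\<Sum>e=0..<length E. inc E e k * y $ e)) = (\<Sum>e=0..<length E. (\<Sum>k=0..<n. inc E e k) * y $ e)"
    by (subst sum.swap) (simp add: sum_distrib_right)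
  also have "\<dots> = 0" using sum_inc[OF G] by simp
  finally show ?thesis unfolding xv_def by (simp add: sum.distrib)
qed

lemma sum_sq_center:
  fixes x :: "nat \<Rightarrow> real"
  assumes "(\<Sum>k=0..<n. x k) = real n * a"
  shows "nsq n (\<lambda>k. x k - a) = (\<Sum>k=0..<n. (x k)\<^sup>2) - real n * a\<^sup>2"
proof -
  have "nsq n (\<lambda>k. x k - a) = (\<Sum>k=0..<n. (x k)\<^sup>2 - 2 * a * x k + a\<^sup>2)"
    unfolding nsq_def by (simp add: power2_eq_square algebra_simps)
  also have "\<dots> = (\<Sum>k=0..<n. (x k)\<^sup>2) - 2 * a * (\<Sum>k=0..<n. x k) + real n * a\<^sup>2"
    by (simp add: sum.distrib sum_subtractf sum_distrib_left)
  finally show ?thesis using assms by (simp add: power2_eq_square algebra_simps)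
qed

definition cbar :: "nat \<Rightarrow> real vec \<Rightarrow> real" where
  "cbar n c = (\<Sum>k=0..<n. c $ k) / real n"

definition Kc :: "nat \<Rightarrow> real vec \<Rightarrow> real" where
  "Kc n c = 1/2 * (\<Sum>k=0..<n. (c$k)\<^sup>2) - real n * (cbar n c)\<^sup>2 / 2"

lemma dualD_center:
  assumes G: "simple_graph n E" and n: "n > 0" and c: "c \<in> carrier_vec n" and y: "y \<in> carrier_vec (length E)"
  shows "dualD n E c y = Kc n c - 1/2 * nsq n (\<lambda>k. xv E c y k - cbar n c)"
proof -
  have "(\<Sum>k=0..<n. xv E c y k) = real n * cbar n c"
    unfolding sum_xv[OF G] cbar_def using n by simp
  from sum_sq_center[OF this] show ?thesis
    unfolding dualD_formula[OF c y] Kc_def by (simp add: field_simps)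
qed

lemma nsq_nonneg: "nsq n x \<ge> 0" unfolding nsq_def by (simp add: sum_nonneg)
lemma Qf_nonneg: "Qf E x \<ge> 0" unfolding Qf_def by (simp add: sum_nonneg)

lemma sum_center_zero:
  assumes G: "simple_graph n E" and n: "n > 0"
  shows "(\<Sum>k=0..<n. xv E c y k - cbar n c) = 0"
  using n by (simp add: sum_subtractf sum_xv[OF G] cbar_def)

lemma Qf_shift: "Qf E (\<lambda>k. x k - a) = Qf E x" unfolding Qf_def by simp

lemma avg_step:
  assumes G: "simple_graph n E" and n: "n > 0" and c: "c \<in> carrier_vec n" and y: "y \<in> carrier_vec (length E)"
    and ystar: "\<forall>y\<in>carrier_vec (length E). dualD n E c y \<le> Dstar"
    and Dstar: "Dstar = dualD n E c ys" and ys: "ys \<in> carrier_vec (length E)"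
    and mu: "0 \<le> \<mu>" "a \<le> \<mu>" and mup: "\<forall>z. (\<Sum>k=0..<n. z k) = 0 \<longrightarrow> \<mu> * nsq n z \<le> Qf E z"
    and m: "length E > 0"
  shows "(\<Sum>e=0..<length E. Dstar - dualD n E c (cd_step n E c y e)) / real (length E)
     \<le> (1 - a / (2 * real (length E))) * (Dstar - dualD n E c y)"
proof -
  let ?m = "length E" let ?x = "xv E c y"
  define z where "z k = ?x k - cbar n c" for k
  define g where "g = Dstar - dualD n E c y"
  have g0: "g \<ge> 0" using ystar y unfolding g_def by auto
  have gz: "g \<le> 1/2 * nsq n z"
  proof -
    have "dualD n E c y = Kc n c - 1/2 * nsq n z" unfolding z_def by (rule dualD_center[OF G n c y])
    moreover have "Dstar \<le> Kc n c"
      using dualD_center[OF G n c ys] nsq_nonneg[of n "\<lambda>k. xv E c ys k - cbar n c"] unfolding Dstar by linarith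
    ultimately show ?thesis unfolding g_def by simp
  qed
  have "(\<Sum>e=0..<?m. Dstar - dualD n E c (cd_step n E c y e))
      = (\<Sum>e=0..<?m. g - (?x (fst (E!e)) - ?x (snd (E!e)))\<^sup>2 / 4)"
    by (rule sum.cong) (simp_all add: dualD_cd_step[OF G c y] g_def)
  also have "\<dots> = real ?m * g - Qf E ?x / 4"
    unfolding Qf_def by (simp add: sum_subtractf sum_divide_distrib)
  also have "Qf E ?x = Qf E z" unfolding z_def Qf_shift ..
  finally have S: "(\<Sum>e=0..<?m. Dstar - dualD n E c (cd_step n E c y e)) = real ?m * g - Qf E z / 4" .
  have "\<mu> * nsq n z \<le> Qf E z" using mup sum_center_zero[OF G n] unfolding z_def by blast
  moreover have "\<mu> * (2 * g) \<le> \<mu> * nsq n z" using gz mu by (intro mult_left_mono) auto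
  moreover have "a * g \<le> \<mu> * g" using mu g0 by (intro mult_right_mono) auto
  ultimately have "a * g / 2 \<le> Qf E z / 4" by linarith
  then have "real ?m * g - Qf E z / 4 \<le> real ?m * g - a * g / 2" by linarith
  then show ?thesis unfolding S g_def[symmetric] using m by (simp add: field_simps)
qed



lemma laplacian_carrier: "laplacian n E \<in> carrier_mat n n"
  unfolding laplacian_def using incidence_carrier[of n E] by auto

lemma lap_mult:
  assumes G: "simple_graph n E" and k: "k < n"
  shows "(laplacian n E *\<^sub>v vec n z) $ k = (\<Sum>e=0..<length E. inc E e k * (z (fst (E!e)) - z (snd (E!e))))"
proof -
  let ?A = "incidence n E"
  have A: "?A \<in> carrier_mat (length E) n" by (rule incidence_carrier)
  have "laplacian n E *\<^sub>v vec n z = transpose_mat ?A *\<^sub>v (?A *\<^sub>v vec n z)"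
    unfolding laplacian_def using A by (intro assoc_mult_mat_vec) auto
  moreover have Av: "(?A *\<^sub>v vec n z) $ e = z (fst (E!e)) - z (snd (E!e))" if "e < length E" for e
  proof -
    have "(?A *\<^sub>v vec n z) $ e = (\<Sum>k=0..<n. inc E e k * z k)"
      using that A by (simp add: scalar_prod_def incidence_index)
    also have "\<dots> = z (fst (E!e)) - z (snd (E!e))" by (rule sum_inc_mult[OF G that])
    finally show ?thesis .
  qed
  moreover have "(transpose_mat ?A *\<^sub>v (?A *\<^sub>v vec n z)) $ k = (\<Sum>e=0..<length E. inc E e k * (?A *\<^sub>v vec n z) $ e)"
    using k A by (simp add: scalar_prod_def incidence_index)
  ultimately show ?thesis by (simp add: Av)
qed

lemma eigvec_from_fun:
  assumes G: "simple_graph n E"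
    and eq: "\<And>k. k < n \<Longrightarrow> (\<Sum>e=0..<length E. inc E e k * (z (fst (E!e)) - z (snd (E!e)))) = \<mu> * z k"
    and nz: "k0 < n" "z k0 \<noteq> 0"
  shows "eigenvalue (laplacian n E) \<mu>"
proof -
  have L: "laplacian n E \<in> carrier_mat n n" by (rule laplacian_carrier)
  have "eigenvector (laplacian n E) (vec n z) \<mu>"
    unfolding eigenvector_def
  proof (intro conjI)
    show "vec n z \<in> carrier_vec (dim_row (laplacian n E))" using L by simp
    show "vec n z \<noteq> 0\<^sub>v (dim_row (laplacian n E))"
    proof
      assume "vec n z = 0\<^sub>v (dim_row (laplacian n E))"
      then have "vec n z $ k0 = 0\<^sub>v n $ k0" using L by simp
      then show False using nz by simp
    qed
    show "laplacian n E *\<^sub>v vec n z = \<mu> \<cdot>\<^sub>v vec n z"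
    proof (rule eq_vecI)
      fix i assume "i < dim_vec (\<mu> \<cdot>\<^sub>v vec n z)"
      then have i: "i < n" by simp
      show "(laplacian n E *\<^sub>v vec n z) $ i = (\<mu> \<cdot>\<^sub>v vec n z) $ i"
        using lap_mult[OF G i, of z] eq[OF i] i by simp
    next
      show "dim_vec (laplacian n E *\<^sub>v vec n z) = dim_vec (\<mu> \<cdot>\<^sub>v vec n z)" using L by simp
    qed
  qed
  then show ?thesis unfolding eigenvalue_def by blast
qed

lemma eig_zero:
  assumes G: "simple_graph n E" and n: "n > 0"
  shows "eigenvalue (laplacian n E) 0"
  by (rule eigvec_from_fun[OF G, of "\<lambda>_. 1" _ 0]) (use n in auto)

lemma sorted_second_le:
  fixes s :: "real list"
  assumes "sorted s" "a \<in> set s" "b \<in> set s" "a < b"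
  shows "s ! 1 \<le> b"
proof (rule ccontr)
  assume H: "\<not> s ! 1 \<le> b"
  obtain p where p: "p < length s" "s ! p = b" using assms(3) by (auto simp: in_set_conv_nth)
  obtain q where q: "q < length s" "s ! q = a" using assms(2) by (auto simp: in_set_conv_nth)
  have "p \<noteq> q" using p q assms(4) by auto
  then have len: "1 < length s" using p q by linarith
  have "p = 0"
  proof (rule ccontr)
    assume "p \<noteq> 0"
    then have "s ! 1 \<le> s ! p" using assms(1) p len by (intro sorted_nth_mono) auto
    then show False using H p by simp
  qed
  then have "s ! 0 \<le> s ! q" using assms(1) q by (intro sorted_nth_mono) auto
  then show False using p q \<open>p = 0\<close> assms(4) by simp
qed

lemma alg_conn_le:
  assumes G: "simple_graph n E" and n: "n > 0" and ev: "eigenvalue (laplacian n E) \<mu>" and mu: "\<mu> > 0"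
  shows "algebraic_connectivity n E \<le> \<mu>"
proof -
  have L: "laplacian n E \<in> carrier_mat n n" by (rule laplacian_carrier)
  let ?p = "char_poly (laplacian n E)"
  have p0: "?p \<noteq> 0" using degree_monic_char_poly[OF L] by auto
  have r1: "poly ?p \<mu> = 0" using ev eigenvalue_root_char_poly[OF L] by simp
  have r0: "poly ?p 0 = 0" using eig_zero[OF G n] eigenvalue_root_char_poly[OF L] by simp
  have "\<mu> \<in># proots ?p" "0 \<in># proots ?p" using r1 r0 p0 by auto
  then show ?thesis unfolding algebraic_connectivity_def
    by (intro sorted_second_le[of _ 0]) (use mu in auto)
qed



definition Kset :: "nat \<Rightarrow> (nat \<Rightarrow> real) set" where
  "Kset n = Pi\<^sub>E UNIV (\<lambda>i. if i < n then {-1..1} else {0}) \<inter> {f. (\<Sum>k=0..<n. f k) = 0} \<inter> {f. nsq n f = 1}"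

lemma compact_Kset: "compact (Kset n)"
proof -
  have "compactin (product_topology (\<lambda>_. euclidean) UNIV) (Pi\<^sub>E UNIV (\<lambda>i. if i < n then {-1..1::real} else {0}))"
    unfolding compactin_PiE by (auto simp: compactin_euclidean_iff)
  then have c1: "compact (Pi\<^sub>E UNIV (\<lambda>i. if i < n then {-1..1::real} else {0}))"
    unfolding euclidean_product_topology compactin_euclidean_iff .
  have cs: "continuous_on UNIV (\<lambda>f::nat\<Rightarrow>real. \<Sum>k=0..<n. f k)"
    by (intro continuous_on_sum) simp
  have cq: "continuous_on UNIV (\<lambda>f::nat\<Rightarrow>real. nsq n f)"
    unfolding nsq_def by (intro continuous_on_sum continuous_on_power) simp
  have "closed {f::nat\<Rightarrow>real. (\<Sum>k=0..<n. f k) = 0}"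
    using closed_Collect_eq[OF cs continuous_on_const] by simp
  moreover have "closed {f::nat\<Rightarrow>real. nsq n f = 1}"
    using closed_Collect_eq[OF cq continuous_on_const] by simp
  ultimately show ?thesis unfolding Kset_def
    by (intro compact_Int_closed c1) auto
qed

lemma cont_Qf: "continuous_on S (Qf E)"
  unfolding Qf_def
  by (intro continuous_on_sum continuous_on_power continuous_on_diff continuous_on_subset[OF continuous_on_product_coordinates]) auto

definition w0 :: "nat \<Rightarrow> real" where
  "w0 i = (if i = 0 then 1 / sqrt 2 else 0) + (if i = 1 then - 1 / sqrt 2 else 0)"

lemma w0_props:
  assumes n: "n \<ge> 2"
  shows "w0 \<in> Kset n" "\<And>i. (w0 i)\<^sup>2 \<le> 1/2"
proof -
  have sq: "(w0 i)\<^sup>2 = (if i = 0 then 1/2 else 0) + (if i = 1 then 1/2 else 0)" for i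
    by (auto simp: w0_def power2_eq_square)
  show "(w0 i)\<^sup>2 \<le> 1/2" for i unfolding sq by auto
  have s: "(\<Sum>k=0..<n. w0 k) = 0" unfolding w0_def using n by (simp add: sum.distrib)
  have q: "nsq n w0 = 1" unfolding nsq_def sq using n by (simp add: sum.distrib)
  have b: "1 / sqrt 2 \<le> (1::real)" "0 \<le> 1 / sqrt (2::real)" by (simp_all add: real_sqrt_ge_one)
  have "w0 i \<in> (if i < n then {-1..1} else {0})" for i
    using n b unfolding w0_def by (auto; linarith)
  then show "w0 \<in> Kset n" unfolding Kset_def using s q by (auto simp: PiE_iff)
qed

lemma exists_min:
  assumes n: "n \<ge> 2"
  shows "\<exists>z\<in>Kset n. \<forall>w\<in>Kset n. Qf E z \<le> Qf E w"
  using continuous_attains_inf[OF compact_Kset, of n "Qf E"] w0_props[OF n] cont_Qf by blast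

lemma Qf_local:
  assumes G: "simple_graph n E" and "\<And>i. i < n \<Longrightarrow> w' i = w i / s"
  shows "Qf E w' = Qf E w / s\<^sup>2"
proof -
  have "Qf E w' = (\<Sum>e=0..<length E. (w (fst (E!e)) - w (snd (E!e)))\<^sup>2 / s\<^sup>2)"
    unfolding Qf_def
    by (rule sum.cong) (use assms simple_edge[OF G] in \<open>auto simp: diff_divide_distrib[symmetric] power_divide\<close>)
  then show ?thesis unfolding Qf_def by (simp add: sum_divide_distrib)
qed

lemma min_rayleigh:
  assumes G: "simple_graph n E" and z: "z \<in> Kset n" and zmin: "\<forall>w\<in>Kset n. Qf E z \<le> Qf E w"
    and w: "(\<Sum>k=0..<n. w k) = 0"
  shows "Qf E z * nsq n w \<le> Qf E w"
proof (cases "nsq n w = 0")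
  case True then show ?thesis using Qf_nonneg by simp
next
  case False
  then have np: "nsq n w > 0" using nsq_nonneg[of n w] by simp
  define s where "s = sqrt (nsq n w)"
  have s: "s > 0" "s\<^sup>2 = nsq n w" using np unfolding s_def by auto
  define w' where "w' i = (if i < n then w i / s else 0)" for i
  have bound: "\<bar>w i\<bar> \<le> s" if "i < n" for i
  proof -
    have "(w i)\<^sup>2 \<le> nsq n w" unfolding nsq_def using that
      by (intro member_le_sum) auto
    then show ?thesis unfolding s_def by (metis real_sqrt_abs real_sqrt_le_mono)
  qed
  have "w' \<in> Kset n"
  proof -
    have "w' i \<in> (if i < n then {-1..1} else {0})" for i
      using bound[of i] s by (auto simp: w'_def abs_le_iff field_simps)
    moreover have "(\<Sum>k=0..<n. w' k) = 0" unfolding w'_def using w by (simp add: sum_divide_distrib[symmetric])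
    moreover have "nsq n w' = 1" unfolding nsq_def w'_def using s np
      by (simp add: power_divide sum_divide_distrib[symmetric] nsq_def[symmetric])
    ultimately show ?thesis unfolding Kset_def by (auto simp: PiE_iff)
  qed
  then have "Qf E z \<le> Qf E w'" using zmin by blast
  also have "Qf E w' = Qf E w / nsq n w" using Qf_local[OF G, of w' w s] s by (simp add: w'_def)
  finally show ?thesis using np by (simp add: field_simps)
qed


definition ip :: "nat \<Rightarrow> (nat \<Rightarrow> real) \<Rightarrow> (nat \<Rightarrow> real) \<Rightarrow> real" where
  "ip n z w = (\<Sum>k=0..<n. z k * w k)"

lemma Qf_expand: "Qf E (\<lambda>k. z k + t * w k) = Qf E z + 2 * t * Bf E z w + t\<^sup>2 * Qf E w"
proof -
  have "Qf E (\<lambda>k. z k + t * w k) = (\<Sum>e=0..<length E. (z (fst (E!e)) - z (snd (E!e)))\<^sup>2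
     + 2 * t * ((z (fst (E!e)) - z (snd (E!e))) * (w (fst (E!e)) - w (snd (E!e))))
     + t\<^sup>2 * (w (fst (E!e)) - w (snd (E!e)))\<^sup>2)"
    unfolding Qf_def by (rule sum.cong) (simp_all add: power2_eq_square algebra_simps)
  then show ?thesis unfolding Qf_def Bf_def by (simp add: sum.distrib sum_distrib_left)
qed

lemma nsq_expand: "nsq n (\<lambda>k. z k + t * w k) = nsq n z + 2 * t * ip n z w + t\<^sup>2 * nsq n w"
proof -
  have "nsq n (\<lambda>k. z k + t * w k) = (\<Sum>k=0..<n. (z k)\<^sup>2 + 2 * t * (z k * w k) + t\<^sup>2 * (w k)\<^sup>2)"
    unfolding nsq_def by (rule sum.cong) (simp_all add: power2_eq_square algebra_simps)
  then show ?thesis unfolding nsq_def ip_def by (simp add: sum.distrib sum_distrib_left)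
qed

lemma quad_zero:
  fixes a b :: real
  assumes "\<forall>t. 0 \<le> a * t + b * t\<^sup>2"
  shows "a = 0"
proof (rule ccontr)
  assume a: "a \<noteq> 0"
  define c where "c = \<bar>b\<bar> + 1"
  have c: "c > 0" "b \<le> c" unfolding c_def by auto
  define t where "t = - a / (2 * c)"
  have "b * t\<^sup>2 \<le> c * t\<^sup>2" using c by (intro mult_right_mono) auto
  also have "c * t\<^sup>2 = a\<^sup>2 / (4 * c)" unfolding t_def using c by (simp add: power2_eq_square field_simps)
  finally have 1: "b * t\<^sup>2 \<le> a\<^sup>2 / (4 * c)" .
  have 2: "a * t = - (a\<^sup>2 / (2 * c))" unfolding t_def using c by (simp add: power2_eq_square field_simps)
  have 3: "a\<^sup>2 / (4 * c) > 0" using a c by simp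
  have "a * t + b * t\<^sup>2 < 0" using 1 2 3 by (simp add: field_simps)
  then show False using assms by (meson not_le)
qed

lemma eig_eq:
  assumes G: "simple_graph n E" and n: "n > 0" and z: "z \<in> Kset n" and zmin: "\<forall>w\<in>Kset n. Qf E z \<le> Qf E w"
    and k: "k < n"
  shows "(\<Sum>e=0..<length E. inc E e k * (z (fst (E!e)) - z (snd (E!e)))) = Qf E z * z k"
proof -
  let ?\<mu> = "Qf E z"
  define w where "w i = (if i = k then 1 else 0) - 1 / real n" for i
  have zs: "(\<Sum>i=0..<n. z i) = 0" and zn: "nsq n z = 1" using z unfolding Kset_def by auto
  have ws: "(\<Sum>i=0..<n. w i) = 0" unfolding w_def using k n by (simp add: sum_subtractf)
  have all: "0 \<le> (2 * (Bf E z w - ?\<mu> * ip n z w)) * t + (Qf E w - ?\<mu> * nsq n w) * t\<^sup>2" for t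
  proof -
    have "(\<Sum>i=0..<n. z i + t * w i) = 0" using zs ws by (simp add: sum.distrib sum_distrib_left[symmetric])
    from min_rayleigh[OF G z zmin this] have "?\<mu> * nsq n (\<lambda>i. z i + t * w i) \<le> Qf E (\<lambda>i. z i + t * w i)" .
    then show ?thesis unfolding Qf_expand nsq_expand zn by (simp add: algebra_simps)
  qed
  have "2 * (Bf E z w - ?\<mu> * ip n z w) = 0" by (rule quad_zero) (use all in auto)
  then have eq: "Bf E z w = ?\<mu> * ip n z w" by simp
  have "Bf E z w = (\<Sum>e=0..<length E. inc E e k * (z (fst (E!e)) - z (snd (E!e))))"
    unfolding Bf_def by (rule sum.cong) (auto simp: w_def inc_alt[OF G])
  moreover have "ip n z w = z k"
  proof -
    have pw: "z i * w i = (if i = k then z i else 0) - z i / real n" for i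
      unfolding w_def by (simp add: right_diff_distrib)
    have "ip n z w = (\<Sum>i=0..<n. (if i = k then z i else 0)) - (\<Sum>i=0..<n. z i) / real n"
      unfolding ip_def pw by (simp add: sum_subtractf sum_divide_distrib)
    then show ?thesis using k zs by simp
  qed
  ultimately show ?thesis using eq by simp
qed


lemma adj_eq:
  assumes "\<forall>e<length E. z (fst (E!e)) = z (snd (E!e))" and "adj E u v"
  shows "z u = z v"
proof -
  obtain i j where ij: "(i,j) \<in> set E" "(u = i \<and> v = j) \<or> (u = j \<and> v = i)"
    using assms(2) unfolding adj_def by blast
  obtain e where e: "e < length E" "E!e = (i,j)" using ij(1) by (metis in_set_conv_nth)
  have "z (fst (E!e)) = z (snd (E!e))" using assms(1) e(1) by blast
  then have "z i = z j" using e(2) by simp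
  then show ?thesis using ij(2) by metis
qed

lemma Qf_pos:
  assumes G: "simple_graph n E" and C: "graph_connected n E" and n: "n > 0" and z: "z \<in> Kset n"
  shows "Qf E z > 0"
proof (rule ccontr)
  assume "\<not> Qf E z > 0"
  then have "Qf E z = 0" using Qf_nonneg[of E z] by simp
  then have "\<forall>e\<in>{0..<length E}. (z (fst (E!e)) - z (snd (E!e)))\<^sup>2 = 0"
    unfolding Qf_def by (subst (asm) sum_nonneg_eq_0_iff) auto
  then have eqE: "\<forall>e<length E. z (fst (E!e)) = z (snd (E!e))" by auto
  have rt: "z u = z v" if "(adj E)\<^sup>*\<^sup>* u v" for u v
    using that
  proof (induction rule: rtranclp_induct)
    case base then show ?case by simp
  next
    case (step y w)
    have "z y = z w" by (rule adj_eq[OF eqE step(2)])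
    then show ?case using step(3) by simp
  qed
  have const: "z u = z 0" if "u < n" for u
  proof -
    have "(adj E)\<^sup>*\<^sup>* 0 u" using C n that unfolding graph_connected_def by blast
    then show ?thesis using rt by metis
  qed
  have zs: "(\<Sum>i=0..<n. z i) = 0" and zn: "nsq n z = 1" using z unfolding Kset_def by auto
  have "(\<Sum>i=0..<n. z i) = (\<Sum>i=0..<n. z 0)" by (intro sum.cong refl) (metis atLeastLessThan_iff const)
  then have "(\<Sum>i=0..<n. z i) = real n * z 0" by simp
  then have z0: "z 0 = 0" using zs n by simp
  have "nsq n z = (\<Sum>i=0..<n. 0)" unfolding nsq_def by (intro sum.cong refl) (metis atLeastLessThan_iff const z0 power_zero_numeral)
  then show False using zn by simp
qed

lemma Qf_w0:
  assumes G: "simple_graph n E"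
  shows "Qf E w0 \<le> 2 * real (length E)"
proof -
  have "(w0 a - w0 b)\<^sup>2 \<le> 2" for a b
  proof -
    have eq: "2 * (w0 a)\<^sup>2 + 2 * (w0 b)\<^sup>2 - (w0 a - w0 b)\<^sup>2 = (w0 a + w0 b)\<^sup>2"
      by (simp add: power2_eq_square algebra_simps)
    have "(w0 a - w0 b)\<^sup>2 \<le> 2 * (w0 a)\<^sup>2 + 2 * (w0 b)\<^sup>2"
      using eq zero_le_power2[of "w0 a + w0 b"] by linarith
    also have "\<dots> \<le> 2" using w0_props(2)[of 2 a] w0_props(2)[of 2 b] by simp
    finally show ?thesis .
  qed
  then have "Qf E w0 \<le> (\<Sum>e=0..<length E. 2)" unfolding Qf_def by (intro sum_mono) auto
  then show ?thesis by simp
qed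

lemma spectral:
  assumes n: "n \<ge> 2" and G: "simple_graph n E" and C: "graph_connected n E"
  shows "\<exists>\<mu>. 0 \<le> \<mu> \<and> algebraic_connectivity n E \<le> \<mu> \<and> \<mu> \<le> 2 * real (length E)
     \<and> (\<forall>z. (\<Sum>k=0..<n. z k) = 0 \<longrightarrow> \<mu> * nsq n z \<le> Qf E z)"
proof -
  obtain z where z: "z \<in> Kset n" and zmin: "\<forall>w\<in>Kset n. Qf E z \<le> Qf E w"
    using exists_min[OF n] by blast
  have n0: "n > 0" using n by simp
  have pos: "Qf E z > 0" by (rule Qf_pos[OF G C n0 z])
  have "\<exists>k0<n. z k0 \<noteq> 0"
  proof (rule ccontr)
    assume "\<not> (\<exists>k0<n. z k0 \<noteq> 0)"
    then have "nsq n z = 0" unfolding nsq_def by simp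
    then show False using z unfolding Kset_def by simp
  qed
  then obtain k0 where k0: "k0 < n" "z k0 \<noteq> 0" by blast
  have ev: "eigenvalue (laplacian n E) (Qf E z)"
    by (rule eigvec_from_fun[OF G eig_eq[OF G n0 z zmin] k0(1) k0(2)])
  have "algebraic_connectivity n E \<le> Qf E z" by (rule alg_conn_le[OF G n0 ev pos])
  moreover have "Qf E z \<le> 2 * real (length E)"
    using zmin w0_props(1)[OF n] Qf_w0[OF G] by fastforce
  moreover have "\<forall>w. (\<Sum>k=0..<n. w k) = 0 \<longrightarrow> Qf E z * nsq n w \<le> Qf E w"
    using min_rayleigh[OF G z zmin] by blast
  ultimately show ?thesis using pos by (intro exI[of _ "Qf E z"]) auto
qed



definition Sk :: "nat \<Rightarrow> nat \<Rightarrow> nat list set" where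
  "Sk m k = {es. length es = k \<and> set es \<subseteq> {0..<m}}"

lemma finite_Sk: "finite (Sk m k)"
proof -
  have "Sk m k = {xs. set xs \<subseteq> {0..<m} \<and> length xs = k}" unfolding Sk_def by auto
  then show ?thesis using finite_lists_length_eq[of "{0..<m}" k] by simp
qed

lemma Sk_Suc: "Sk m (Suc k) = (\<lambda>(es,e). es @ [e]) ` (Sk m k \<times> {0..<m})"
proof
  show "Sk m (Suc k) \<subseteq> (\<lambda>(es,e). es @ [e]) ` (Sk m k \<times> {0..<m})"
  proof
    fix xs assume xs: "xs \<in> Sk m (Suc k)"
    then have "xs \<noteq> []" unfolding Sk_def by auto
    then have "xs = butlast xs @ [last xs]" by simp
    moreover have "butlast xs \<in> Sk m k"
      using xs unfolding Sk_def by (auto dest: in_set_butlastD)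
    moreover have "last xs \<in> {0..<m}"
      using xs last_in_set[OF \<open>xs \<noteq> []\<close>] unfolding Sk_def by blast
    ultimately show "xs \<in> (\<lambda>(es,e). es @ [e]) ` (Sk m k \<times> {0..<m})"
      by (metis (no_types, lifting) SigmaI case_prod_conv image_eqI)
  qed
  show "(\<lambda>(es,e). es @ [e]) ` (Sk m k \<times> {0..<m}) \<subseteq> Sk m (Suc k)"
    unfolding Sk_def by auto
qed

lemma inj_snoc: "inj_on (\<lambda>(es,e). es @ [e]) A"
  by (auto simp: inj_on_def)

lemma expect_Sk: "expect_k m k f = (\<Sum>es\<in>Sk m k. f es) / real m ^ k"
  unfolding expect_k_def Sk_def by simp

lemma expect_Suc:
  assumes m: "m > 0"
  shows "expect_k m (Suc k) f = expect_k m k (\<lambda>es. (\<Sum>e=0..<m. f (es @ [e])) / real m)"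
proof -
  have "(\<Sum>es\<in>Sk m (Suc k). f es) = (\<Sum>p\<in>Sk m k \<times> {0..<m}. f ((\<lambda>(es,e). es @ [e]) p))"
    unfolding Sk_Suc by (rule sum.reindex[OF inj_snoc, unfolded comp_def])
  also have "\<dots> = (\<Sum>(es,e)\<in>Sk m k \<times> {0..<m}. f (es @ [e]))"
    by (intro sum.cong) auto
  also have "\<dots> = (\<Sum>es\<in>Sk m k. \<Sum>e=0..<m. f (es @ [e]))"
    by (rule sum.cartesian_product[symmetric])
  finally have *: "(\<Sum>es\<in>Sk m (Suc k). f es) = (\<Sum>es\<in>Sk m k. \<Sum>e=0..<m. f (es @ [e]))" .
  show ?thesis unfolding expect_Sk * using m by (simp add: sum_divide_distrib[symmetric] field_simps)
qed

lemma expect_mono: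
  assumes m: "m > 0" and le: "\<And>es. es \<in> Sk m k \<Longrightarrow> f es \<le> g es"
  shows "expect_k m k f \<le> expect_k m k g"
  unfolding expect_Sk using m le by (intro divide_right_mono sum_mono) auto

lemma expect_scale: "expect_k m k (\<lambda>es. a * f es) = a * expect_k m k f"
  unfolding expect_Sk by (simp add: sum_distrib_left)

lemma expect_0: "expect_k m 0 f = f []"
proof -
  have "Sk m 0 = {[]}" unfolding Sk_def by auto
  then show ?thesis unfolding expect_Sk by simp
qed

lemma cd_iter_snoc: "cd_iter n E c (es @ [e]) = cd_step n E c (cd_iter n E c es) e"
  unfolding cd_iter_def by simp

lemma edges_nonempty:
  assumes n: "n \<ge> 2" and C: "graph_connected n E"
  shows "length E > 0"
proof -
  have "(adj E)\<^sup>*\<^sup>* 0 1" using C n unfolding graph_connected_def by auto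
  then obtain y where "adj E 0 y" by (metis converse_rtranclpE zero_neq_one)
  then obtain i j where "(i,j) \<in> set E" unfolding adj_def by blast
  then show ?thesis by (metis length_pos_if_in_set)
qed

theorem mainTheorem17:
  fixes n :: nat and E :: "(nat \<times> nat) list" and c ystar :: "real vec" and k :: nat
  assumes "n \<ge> 2"
    and "simple_graph n E"
    and "graph_connected n E"
    and "c \<in> carrier_vec n"
    and "ystar \<in> carrier_vec (length E)"
    and "\<forall>y\<in>carrier_vec (length E). dualD n E c y \<le> dualD n E c ystar"
  shows "expect_k (length E) k (\<lambda>es. dualD n E c ystar - dualD n E c (cd_iter n E c es))
         \<le> (1 - algebraic_connectivity n E / (2 * real (length E))) ^ k
             * (dualD n E c ystar - dualD n E c (0\<^sub>v (length E)))"
proof -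
  note n = assms(1) and G = assms(2) and C = assms(3) and c = assms(4) and ys = assms(5) and opt = assms(6)
  let ?m = "length E"
  let ?a = "algebraic_connectivity n E"
  let ?r = "1 - ?a / (2 * real ?m)"
  define g where "g es = dualD n E c ystar - dualD n E c (cd_iter n E c es)" for es
  have m: "?m > 0" by (rule edges_nonempty[OF n C])
  have n0: "n > 0" using n by simp
  obtain \<mu> where mu: "0 \<le> \<mu>" "?a \<le> \<mu>" "\<mu> \<le> 2 * real ?m"
    and mup: "\<forall>z. (\<Sum>k=0..<n. z k) = 0 \<longrightarrow> \<mu> * nsq n z \<le> Qf E z"
    using spectral[OF n G C] by blast
  have r0: "?r \<ge> 0" using mu m by (simp add: field_simps)
  have step: "(\<Sum>e=0..<?m. g (es @ [e])) / real ?m \<le> ?r * g es" for es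
    unfolding g_def cd_iter_snoc
    by (rule avg_step[OF G n0 c cd_iter_carrier _ refl ys mu(1) mu(2) mup m]) (use opt in blast)
  have "expect_k ?m k g \<le> ?r ^ k * g []"
  proof (induction k)
    case 0 then show ?case by (simp add: expect_0)
  next
    case (Suc k)
    have "expect_k ?m (Suc k) g = expect_k ?m k (\<lambda>es. (\<Sum>e=0..<?m. g (es @ [e])) / real ?m)"
      by (rule expect_Suc[OF m])
    also have "\<dots> \<le> expect_k ?m k (\<lambda>es. ?r * g es)"
      by (rule expect_mono[OF m step])
    also have "\<dots> = ?r * expect_k ?m k g" by (rule expect_scale)
    also have "\<dots> \<le> ?r * (?r ^ k * g [])" using Suc r0 by (intro mult_left_mono) auto
    finally show ?case by simp
  qed
  moreover have "g [] = dualD n E c ystar - dualD n E c (0\<^sub>v (length E))"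
    unfolding g_def cd_iter_def by simp
  ultimately show ?thesis unfolding g_def by simp
qed

end
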